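(* Let $L_w=BWB^\top\in\mathbb{R}^{n\times n}$ be the weighted Laplacian of a connected undirected graph with strictly positive edge weights. Let $i\neq j$ be two nodes and $E=e_i-e_j\in\mathbb{R}^n$ (a single port). Consider the single-input single-output system $\dot x=-L_w x + E d$, $y=E^\top x$, with $d\in\mathbb{R}$. Then the induced $\mathcal{L}_2$-gain ($\mathcal{H}_\infty$-norm) from $d$ to $y$ equals $$\gamma = R_{ij}(L_w) := (e_i-e_j)^\top L_w^{\dagger}(e_i-e_j),$$ the effective resistance between nodes $i$ and $j$.
   Context: A weighted undirected graph has nodes $v_1,\dots,v_n$, edges $\mathcal{E}_1,\dots,\mathcal{E}_m$ and weights $w_1,\dots,w_m$. With an arbitrary orientation of each edge, the incidence matrix $B\in\mathbb{R}^{n\times m}$ has $B_{ij}=1$ if edge $\mathcal{E}_j$ starts at $v_i$, $-1$ if it ends at $v_i$, $0$ otherwise; $W=\mathrm{diag}(w_1,\dots,w_m)$ and $L_w=BWB^\top$. $e_1,\dots,e_n$ is the canonical basis of $\mathbb{R}^n$ and $L_w^\dagger$ is the Moore–Penrose pseudoinverse. The induced $\mathcal{L}_2$-gain from $d$ to $y$ (with $x(0)=0$) is $\sup_{d\in L_2[0,\infty),d\ne0}\|y\|_2/\|d\|_2$, equivalently $\sup_{\omega\in\mathbb{R}}|\mathbb{G}(j\omega)|$ with $\mathbb{G}(s)=E^\top(sI+L_w)^{-1}E$. *)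

theory Defs
  imports "HOL-Analysis.Analysis"
begin

text \<open>Graph with node type 'n and edge type 'm (both finite). Each edge e is
  oriented arbitrarily from src e to tgt e (src e \<noteq> tgt e).\<close>

definition incidence :: "('m \<Rightarrow> 'n) \<Rightarrow> ('m \<Rightarrow> 'n) \<Rightarrow> real ^ 'm ^ 'n" where
  "incidence src tgt = (\<chi> i e. if i = src e then 1 else if i = tgt e then -1 else 0)"

definition weighted_laplacian ::
  "('m::finite \<Rightarrow> 'n::finite) \<Rightarrow> ('m \<Rightarrow> 'n) \<Rightarrow> ('m \<Rightarrow> real) \<Rightarrow> real ^ 'n ^ 'n" where
  "weighted_laplacian src tgt w =
     incidence src tgt ** (\<chi> a b. if a = b then w a else 0) ** transpose (incidence src tgt)"

definition graph_connected :: "('m \<Rightarrow> 'n) \<Rightarrow> ('m \<Rightarrow> 'n) \<Rightarrow> bool" where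
  "graph_connected src tgt \<longleftrightarrow>
     (\<forall>u v. (u, v) \<in> ({(src e, tgt e) | e. True} \<union> {(tgt e, src e) | e. True})\<^sup>*)"

definition pinv :: "real ^ 'n ^ 'n \<Rightarrow> real ^ 'n ^ 'n" where
  "pinv A = (THE X. A ** X ** A = A \<and> X ** A ** X = X \<and>
                    transpose (A ** X) = A ** X \<and> transpose (X ** A) = X ** A)"

definition port_vector :: "'n::finite \<Rightarrow> 'n \<Rightarrow> real ^ 'n" where
  "port_vector i j = axis i 1 - axis j 1"

definition eff_resistance :: "real ^ 'n ^ 'n \<Rightarrow> 'n::finite \<Rightarrow> 'n \<Rightarrow> real" where
  "eff_resistance L i j = port_vector i j \<bullet> (pinv L *v port_vector i j)"

definition transfer_fn :: "real ^ 'n ^ 'n \<Rightarrow> real ^ 'n \<Rightarrow> complex \<Rightarrow> complex" where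
  "transfer_fn L E s =
     (let Ec = (\<chi> k. complex_of_real (E $ k));
          M = matrix_inv ((\<chi> a b. (if a = b then s else 0) + complex_of_real (L $ a $ b)))
      in \<Sum>k\<in>UNIV. Ec $ k * (M *v Ec) $ k)"

text \<open>The frequency \<omega> = 0 is excluded since sI + L is singular at s = 0
  (the removable singularity does not affect the supremum).\<close>
definition hinf_gain :: "real ^ 'n ^ 'n \<Rightarrow> real ^ 'n \<Rightarrow> real" where
  "hinf_gain L E = Sup {cmod (transfer_fn L E (\<i> * complex_of_real \<omega>)) | \<omega>. \<omega> \<noteq> 0}"

end

theory Submission
  imports Defs
begin


lemma penrose_unique:
  fixes A X Y :: "real^'n^'n"
  assumes x1: "A ** X ** A = A" and x2: "X ** A ** X = X"
    and x3: "transpose (A ** X) = A ** X" and x4: "transpose (X ** A) = X ** A"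
    and y1: "A ** Y ** A = A" and y2: "Y ** A ** Y = Y"
    and y3: "transpose (A ** Y) = A ** Y" and y4: "transpose (Y ** A) = Y ** A"
  shows "X = Y"
proof -
  have tA1: "transpose A = transpose A ** (A ** Y)"
  proof -
    have "transpose A = transpose (A ** Y ** A)" using y1 by simp
    also have "\<dots> = transpose A ** transpose (A ** Y)" by (simp add: matrix_transpose_mul)
    finally show ?thesis using y3 by simp
  qed
  have tA2: "transpose A = (X ** A) ** transpose A"
  proof -
    have "transpose A = transpose (A ** (X ** A))" using x1 by (simp add: matrix_mul_assoc)
    also have "\<dots> = transpose (X ** A) ** transpose A" by (simp add: matrix_transpose_mul)
    finally show ?thesis using x4 by simp
  qed
  have "X = X ** transpose (A ** X)" using x2 x3 by (simp add: matrix_mul_assoc)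
  also have "\<dots> = X ** transpose X ** transpose A" by (simp add: matrix_transpose_mul matrix_mul_assoc)
  also have "\<dots> = X ** transpose X ** transpose A ** (A ** Y)" by (subst tA1) (simp add: matrix_mul_assoc)
  also have "\<dots> = X ** transpose (A ** X) ** (A ** Y)" by (simp add: matrix_transpose_mul matrix_mul_assoc)
  also have "\<dots> = (X ** A ** X) ** (A ** Y)" using x3 by (simp add: matrix_mul_assoc)
  also have "\<dots> = X ** A ** Y" using x2 by (simp add: matrix_mul_assoc)
  finally have hX: "X = X ** A ** Y" .
  have "Y = transpose (Y ** A) ** Y" using y2 y4 by simp
  also have "\<dots> = transpose A ** transpose Y ** Y" by (simp add: matrix_transpose_mul)
  also have "\<dots> = (X ** A) ** transpose A ** transpose Y ** Y" by (subst tA2) (simp add: matrix_mul_assoc)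
  also have "\<dots> = (X ** A) ** transpose (Y ** A) ** Y" by (simp add: matrix_transpose_mul matrix_mul_assoc)
  also have "\<dots> = X ** A ** (Y ** A ** Y)" using y4 by (simp add: matrix_mul_assoc)
  also have "\<dots> = X ** A ** Y" using y2 by simp
  finally show ?thesis using hX by simp
qed

lemma pinv_eq:
  fixes A X :: "real^'n^'n"
  assumes x1: "A ** X ** A = A" and x2: "X ** A ** X = X"
    and x3: "transpose (A ** X) = A ** X" and x4: "transpose (X ** A) = X ** A"
  shows "pinv A = X"
  unfolding pinv_def
  by (rule the_equality) (use assms penrose_unique in blast)+



locale lap =
  fixes src tgt :: "'m::finite \<Rightarrow> 'n::finite" and w :: "'m \<Rightarrow> real"
  assumes no_loops: "\<And>e. src e \<noteq> tgt e"
    and pos: "\<And>e. w e > 0"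
begin

abbreviation "B \<equiv> incidence src tgt"
abbreviation "L \<equiv> weighted_laplacian src tgt w"

definition D :: "real ^ 'n \<Rightarrow> real ^ 'm" where
  "D x = (\<chi> e. sqrt (w e) * (x $ src e - x $ tgt e))"

lemma Bt_vec: "(y v* B) $ e = y $ src e - y $ tgt e"
proof -
  have "(y v* B) $ e = (\<Sum>a\<in>UNIV. (if a = src e then 1 else if a = tgt e then -1 else 0) * y $ a)"
    by (simp add: vector_matrix_mult_def incidence_def mult.commute)
  also have "\<dots> = (\<Sum>a\<in>UNIV. (if a = src e then y $ a else 0) + (if a = tgt e then - y $ a else 0))"
    by (rule sum.cong) (use no_loops[of e] in auto)
  also have "\<dots> = y $ src e - y $ tgt e"
    by (simp add: sum.distrib)
  finally show ?thesis .
qed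

lemma L_vec: "L *v y = B *v (\<chi> e. w e * (y $ src e - y $ tgt e))"
proof -
  have "L *v y = B *v ((\<chi> a b. if a = b then w a else 0) *v (transpose B *v y))"
    unfolding weighted_laplacian_def
    by (simp only: matrix_vector_mul_assoc matrix_mul_assoc)
  also have "transpose B *v y = y v* B" by (simp add: transpose_matrix_vector)
  also have "(\<chi> a b. if a = b then w a else 0) *v (y v* B) = (\<chi> e. w e * (y $ src e - y $ tgt e))"
    by (simp add: vec_eq_iff matrix_vector_mult_def Bt_vec if_distrib if_distribR cong: if_cong)
  finally show ?thesis .
qed

lemma inner_B: "x \<bullet> (B *v v) = (\<Sum>e\<in>UNIV. v $ e * (x $ src e - x $ tgt e))"
proof -
  have "x \<bullet> (B *v v) = (x v* B) \<bullet> v"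
    by (simp add: dot_lmul_matrix)
  then show ?thesis by (simp add: inner_vec_def Bt_vec mult.commute)
qed

lemma sqw[simp]: "sqrt (w e) * sqrt (w e) = w e"
  using pos[of e] by (simp add: less_imp_le)

lemma inner_L: "x \<bullet> (L *v y) = D x \<bullet> D y"
proof -
  have "x \<bullet> (L *v y) = (\<Sum>e\<in>UNIV. w e * (y $ src e - y $ tgt e) * (x $ src e - x $ tgt e))"
    by (simp add: L_vec inner_B)
  also have "\<dots> = D x \<bullet> D y"
  proof -
    have eq: "w e * (y $ src e - y $ tgt e) * (x $ src e - x $ tgt e) = D x $ e * D y $ e" for e
    proof -
      have "sqrt (w e) * (x $ src e - x $ tgt e) * (sqrt (w e) * (y $ src e - y $ tgt e))
        = (sqrt (w e) * sqrt (w e)) * ((y $ src e - y $ tgt e) * (x $ src e - x $ tgt e))" by algebra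
      then show ?thesis unfolding D_def by (simp add: abs_of_pos[OF pos])
    qed
    show ?thesis by (simp add: inner_vec_def eq)
  qed
  finally show ?thesis .
qed

lemma L_sym: "x \<bullet> (L *v y) = y \<bullet> (L *v x)"
  by (simp add: inner_L inner_commute)

lemma psd: "0 \<le> x \<bullet> (L *v x)"
  by (simp add: inner_L)

lemma D_one: "D 1 = 0"
  by (simp add: D_def vec_eq_iff)

lemma D_zero_L: assumes "D x = 0" shows "L *v x = 0"
proof -
  have "(L *v x) \<bullet> (L *v x) = 0" by (simp add: inner_L assms)
  then show ?thesis by simp
qed

lemma L_one: "L *v 1 = 0"
  by (rule D_zero_L[OF D_one])

lemma one_L: "1 \<bullet> (L *v y) = 0"
  by (simp add: inner_L D_one)

lemma quad0_D: assumes "x \<bullet> (L *v x) = 0" shows "D x = 0"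
  using assms by (simp add: inner_L)

lemma quad0_L: assumes "x \<bullet> (L *v x) = 0" shows "L *v x = 0"
  using D_zero_L quad0_D assms by blast

lemma quad0_edge: assumes "x \<bullet> (L *v x) = 0" shows "x $ src e = x $ tgt e"
proof -
  have "D x $ e = 0" using quad0_D[OF assms] by simp
  then show ?thesis using pos[of e] by (simp add: D_def)
qed

end

locale lapc = lap src tgt w for src tgt :: "'m::finite \<Rightarrow> 'n::finite" and w +
  assumes conn: "graph_connected src tgt"
begin

lemma const_vec: assumes "\<And>e. x $ src e = x $ tgt e" shows "x $ u = x $ v"
proof -
  let ?R = "{(src e, tgt e) | e. True} \<union> {(tgt e, src e) | e. True}"
  have "(u, v) \<in> ?R\<^sup>*" using conn unfolding graph_connected_def by blast
  then show ?thesis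
  proof (induction rule: rtrancl_induct)
    case base then show ?case by simp
  next
    case (step y z) then show ?case using assms by auto
  qed
qed

definition Jm :: "real^'n^'n" where "Jm = (\<chi> a b. 1 / real CARD('n))"

lemma one_one: "(1::real^'n) \<bullet> 1 = real CARD('n)"
  by (simp add: inner_vec_def)

lemma Jm_vec: "Jm *v v = ((1 \<bullet> v) / real CARD('n)) *\<^sub>R 1"
  by (simp add: Jm_def vec_eq_iff matrix_vector_mult_def inner_vec_def sum_divide_distrib)

lemma one_Jm: "1 \<bullet> (Jm *v v) = 1 \<bullet> v"
  by (simp add: Jm_vec one_one)


lemma one_M: "1 \<bullet> ((L + Jm) *v v) = 1 \<bullet> v"
  by (simp add: matrix_vector_mult_add_rdistrib inner_add_right one_L one_Jm)

lemma M_inj: assumes "(L + Jm) *v v = 0" shows "v = 0"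
proof -
  have s0: "1 \<bullet> v = 0" using one_M[of v] assms by simp
  then have "Jm *v v = 0" by (simp add: Jm_vec)
  then have "L *v v = 0" using assms by (simp add: matrix_vector_mult_add_rdistrib)
  then have "v \<bullet> (L *v v) = 0" by simp
  then have c: "\<And>a b. v $ a = v $ b" using const_vec quad0_edge by blast
  fix a0 :: 'n
  define c0 where "c0 = v $ a0"
  have vv: "v = (\<chi> a. c0)" using c unfolding c0_def by (simp add: vec_eq_iff)
  have "1 \<bullet> ((\<chi> a. c0)::real^'n) = real CARD('n) * c0" by (simp add: inner_vec_def)
  then have "c0 = 0" using s0 vv by simp
  then show ?thesis using vv by (simp add: vec_eq_iff)
qed

definition K :: "real^'n^'n" where "K = (SOME K :: real^'n^'n. K ** (L + Jm) = mat 1)"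

lemma K_left: "K ** (L + Jm) = mat 1"
proof -
  have "\<exists>B. B ** (L + Jm) = mat 1"
    unfolding matrix_left_invertible_ker using M_inj by blast
  then show ?thesis unfolding K_def by (rule someI_ex)
qed

lemma K_right: "(L + Jm) ** K = mat 1"
  using K_left matrix_left_right_inverse by blast

lemma KM: "K *v ((L + Jm) *v v) = v"
  by (simp add: matrix_vector_mul_assoc K_left)

lemma MK: "(L + Jm) *v (K *v v) = v"
  by (simp add: matrix_vector_mul_assoc K_right)

lemma M_one: "(L + Jm) *v 1 = 1"
  by (simp add: matrix_vector_mult_add_rdistrib L_one Jm_vec one_one)

lemma K_one: "K *v 1 = 1"
  using KM[of 1] M_one by simp

lemma one_K: "1 \<bullet> (K *v v) = 1 \<bullet> v"
  using one_M[of "K *v v"] MK[of v] by simp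

definition X :: "real^'n^'n" where "X = K - Jm"

definition Pm :: "real^'n^'n" where "Pm = mat 1 - Jm"

lemma Pm_vec: "Pm *v v = v - ((1 \<bullet> v) / real CARD('n)) *\<^sub>R 1"
  by (simp add: Pm_def matrix_vector_mult_diff_rdistrib Jm_vec)

lemma X_vec: "X *v v = K *v v - ((1 \<bullet> v) / real CARD('n)) *\<^sub>R 1"
  by (simp add: X_def matrix_vector_mult_diff_rdistrib Jm_vec)

lemma LX_vec: "L *v (X *v v) = Pm *v v"
proof -
  have "L *v (X *v v) = L *v (K *v v)"
    by (simp add: X_vec matrix_vector_mult_diff_distrib matrix_vector_mult_scaleR L_one)
  also have "\<dots> = (L + Jm) *v (K *v v) - Jm *v (K *v v)"
    by (simp add: matrix_vector_mult_add_rdistrib)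
  also have "\<dots> = Pm *v v" by (simp add: MK Jm_vec one_K Pm_vec)
  finally show ?thesis .
qed

lemma XL_vec: "X *v (L *v v) = Pm *v v"
proof -
  have h1: "X *v (L *v v) = K *v (L *v v)"
    by (simp add: X_vec one_L)
  have "L *v v = (L + Jm) *v v - Jm *v v"
    by (simp add: matrix_vector_mult_add_rdistrib)
  then have "K *v (L *v v) = K *v ((L + Jm) *v v - Jm *v v)" by simp
  also have "K *v ((L + Jm) *v v - Jm *v v) = Pm *v v"
    by (simp add: matrix_vector_mult_diff_distrib KM Jm_vec matrix_vector_mult_scaleR K_one Pm_vec)
  finally show ?thesis using h1 by simp
qed

lemma one_X: "1 \<bullet> (X *v v) = 0"
  by (simp add: X_vec inner_diff_right one_K one_one)

lemma LX: "L ** X = Pm"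
  by (simp add: matrix_eq matrix_vector_mul_assoc[symmetric] LX_vec)

lemma XL: "X ** L = Pm"
  by (simp add: matrix_eq matrix_vector_mul_assoc[symmetric] XL_vec)

lemma Pm_sym: "transpose Pm = Pm"
  by (simp add: Pm_def Jm_def transpose_def mat_def vec_eq_iff)

lemma LXL: "L ** X ** L = L"
  by (simp add: LX matrix_eq matrix_vector_mul_assoc[symmetric] Pm_vec one_L)

lemma XLX: "X ** L ** X = X"
  by (simp add: XL matrix_eq matrix_vector_mul_assoc[symmetric] Pm_vec one_X)

lemma pinv_L: "pinv L = X"
  by (rule pinv_eq[OF LXL XLX]) (simp_all add: LX XL Pm_sym)

lemma Pm_fix: "1 \<bullet> u = 0 \<Longrightarrow> Pm *v u = u"
  by (simp add: Pm_vec)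

lemma XL_fix: "1 \<bullet> u = 0 \<Longrightarrow> X *v (L *v u) = u"
  by (simp add: XL_vec Pm_fix)

lemma LX_fix: "1 \<bullet> u = 0 \<Longrightarrow> L *v (X *v u) = u"
  by (simp add: LX_vec Pm_fix)

lemma X_bound: "\<exists>C\<ge>0. \<forall>u. 1 \<bullet> u = 0 \<longrightarrow> u \<bullet> (X *v u) \<le> C * (u \<bullet> (L *v u))"
proof -
  obtain Kb where Kb: "\<And>x. norm (X *v x) \<le> norm x * Kb"
    using bounded_linear.bounded[OF matrix_vector_mul_bounded_linear[of X]] by blast
  have "u \<bullet> (X *v u) \<le> (max Kb 0)^2 * (u \<bullet> (L *v u))" if u1: "1 \<bullet> u = 0" for u
  proof -
    define q where "q = u \<bullet> u"
    define p where "p = u \<bullet> (L *v u)"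
    define r where "r = u \<bullet> (X *v u)"
    define k where "k = max Kb 0"
    have q0: "q \<ge> 0" "p \<ge> 0" unfolding q_def p_def by (simp_all add: psd)
    have k0: "k \<ge> 0" unfolding k_def by simp
    have qe: "q = D u \<bullet> D (X *v u)"
      unfolding q_def by (simp add: inner_L[symmetric] LX_fix u1)
    have re: "r = D (X *v u) \<bullet> D (X *v u)"
      unfolding r_def by (simp add: inner_L[symmetric] LX_fix u1 inner_commute)
    have pe: "p = D u \<bullet> D u" unfolding p_def by (simp add: inner_L)
    have r0: "r \<ge> 0" using re by simp
    have cs: "q^2 \<le> p * r"
      unfolding qe pe re using Cauchy_Schwarz_ineq by blast
    have "r \<le> norm u * norm (X *v u)" unfolding r_def by (rule norm_cauchy_schwarz)
    also have "\<dots> \<le> norm u * (norm u * Kb)" by (simp add: Kb mult_left_mono)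
    also have "\<dots> = Kb * q" unfolding q_def by (simp add: power2_norm_eq_inner[symmetric] power2_eq_square)
    also have "\<dots> \<le> k * q" unfolding k_def using q0 by (simp add: mult_right_mono)
    finally have rk: "r \<le> k * q" .
    show ?thesis
    proof (cases "q = 0")
      case True then show ?thesis using rk r0 q0 k0 unfolding r_def[symmetric] p_def[symmetric] k_def[symmetric] by simp
    next
      case False
      then have qp: "q > 0" using q0 by simp
      have "p * r \<le> p * (k * q)" by (rule mult_left_mono[OF rk q0(2)])
      moreover have "p * (k * q) = (p * k) * q" by (simp only: mult.assoc)
      ultimately have "q * q \<le> (p * k) * q" using cs by (simp add: power2_eq_square)
      then have "q \<le> p * k" using qp by (rule mult_right_le_imp_le)
      then have "k * q \<le> k * (p * k)" using k0 by (rule mult_left_mono)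
      moreover have "k * (p * k) = k^2 * p" by (simp add: power2_eq_square)
      ultimately have "r \<le> k^2 * p" using rk by linarith
      then show ?thesis unfolding r_def p_def k_def .
    qed
  qed
  then show ?thesis by (intro exI[of _ "(max Kb 0)^2"]) auto
qed

lemma freq_Q:
  assumes e1: "L *v a - \<omega> *\<^sub>R b = E" and e2: "L *v b + \<omega> *\<^sub>R a = 0"
  shows "E \<bullet> a = a \<bullet> (L *v a) + b \<bullet> (L *v b)"
proof -
  have "L *v a = E + \<omega> *\<^sub>R b" using e1 by (simp add: algebra_simps)
  moreover have "L *v b = - \<omega> *\<^sub>R a" using e2 by (simp add: algebra_simps eq_neg_iff_add_eq_0)
  ultimately show ?thesis by (simp add: inner_add_right inner_commute)
qed

lemma freq_upper:
  assumes E1: "1 \<bullet> E = 0"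
    and e1: "L *v a - \<omega> *\<^sub>R b = E" and e2: "L *v b + \<omega> *\<^sub>R a = 0"
  shows "(E \<bullet> a)^2 + (E \<bullet> b)^2 \<le> (E \<bullet> (X *v E)) * (E \<bullet> a)"
proof -
  define x0 where "x0 = X *v E"
  have Lx0: "L *v x0 = E" unfolding x0_def using LX_fix[OF E1] .
  have R: "E \<bullet> (X *v E) = D x0 \<bullet> D x0"
  proof -
    have "D x0 \<bullet> D x0 = x0 \<bullet> E" using Lx0 inner_L by metis
    then show ?thesis by (simp add: x0_def inner_commute)
  qed
  have ea: "E \<bullet> a = D x0 \<bullet> D a"
    using inner_L[of a x0] by (simp add: Lx0 inner_commute)
  have eb: "E \<bullet> b = D x0 \<bullet> D b"
    using inner_L[of b x0] by (simp add: Lx0 inner_commute)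
  have c1: "(E \<bullet> a)^2 \<le> (E \<bullet> (X *v E)) * (a \<bullet> (L *v a))"
    unfolding ea R inner_L using Cauchy_Schwarz_ineq by blast
  have c2: "(E \<bullet> b)^2 \<le> (E \<bullet> (X *v E)) * (b \<bullet> (L *v b))"
    unfolding eb R inner_L using Cauchy_Schwarz_ineq by blast
  have "(E \<bullet> (X *v E)) * (E \<bullet> a) = (E \<bullet> (X *v E)) * (a \<bullet> (L *v a)) + (E \<bullet> (X *v E)) * (b \<bullet> (L *v b))"
    using freq_Q[OF e1 e2] by (simp add: distrib_left)
  then show ?thesis using c1 c2 by linarith
qed

lemma freq_lower:
  assumes E1: "1 \<bullet> E = 0" and w0: "\<omega> \<noteq> 0"
    and e1: "L *v a - \<omega> *\<^sub>R b = E" and e2: "L *v b + \<omega> *\<^sub>R a = 0"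
    and C: "C \<ge> 0" "\<And>u. 1 \<bullet> u = 0 \<Longrightarrow> u \<bullet> (X *v u) \<le> C * (u \<bullet> (L *v u))"
  shows "E \<bullet> (X *v E) \<le> (E \<bullet> a) * (1 + \<omega>^2 * C)"
proof -
  have "1 \<bullet> (L *v a - \<omega> *\<^sub>R b) = 0" using e1 E1 by simp
  then have b1: "1 \<bullet> b = 0" using w0 by (simp add: inner_diff_right one_L)
  have "1 \<bullet> (L *v b + \<omega> *\<^sub>R a) = 0" using e2 by simp
  then have a1: "1 \<bullet> a = 0" using w0 by (simp add: inner_add_right one_L)
  have "X *v (L *v b + \<omega> *\<^sub>R a) = 0" using e2 by simp
  then have bX: "b = - \<omega> *\<^sub>R (X *v a)"
    by (simp add: matrix_vector_right_distrib matrix_vector_mult_scaleR XL_fix[OF b1] algebra_simps eq_neg_iff_add_eq_0)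
  have x0: "X *v E = a - \<omega> *\<^sub>R (X *v b)"
    using e1[symmetric] by (simp add: matrix_vector_mult_diff_distrib matrix_vector_mult_scaleR XL_fix[OF a1])
  have LaXb: "(L *v a) \<bullet> (X *v b) = a \<bullet> b"
    by (metis L_sym LX_fix[OF b1] inner_commute)
  have q1: "E \<bullet> (X *v E) = E \<bullet> a - \<omega> * (E \<bullet> (X *v b))"
    by (simp add: x0 inner_diff_right)
  have q2: "E \<bullet> (X *v b) = a \<bullet> b - \<omega> * (b \<bullet> (X *v b))"
    using e1[symmetric] by (simp add: inner_diff_left LaXb)
  have q3: "a \<bullet> b = - \<omega> * (a \<bullet> (X *v a))"
    using bX by simp
  have R: "E \<bullet> (X *v E) = E \<bullet> a + \<omega>^2 * (a \<bullet> (X *v a) + b \<bullet> (X *v b))"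
    unfolding q1 q2 q3 by (simp add: power2_eq_square algebra_simps)
  have "a \<bullet> (X *v a) + b \<bullet> (X *v b) \<le> C * (a \<bullet> (L *v a)) + C * (b \<bullet> (L *v b))"
    using C(2)[OF a1] C(2)[OF b1] by linarith
  also have "\<dots> = C * (E \<bullet> a)" using freq_Q[OF e1 e2] by (simp add: distrib_left)
  finally have "\<omega>^2 * (a \<bullet> (X *v a) + b \<bullet> (X *v b)) \<le> \<omega>^2 * (C * (E \<bullet> a))"
    by (simp add: mult_left_mono)
  then show ?thesis using R by (simp add: algebra_simps)
qed

end


context lapc begin

definition Lc :: "real \<Rightarrow> complex^'n^'n" where
  "Lc \<omega> = (\<chi> a b. (if a = b then \<i> * complex_of_real \<omega> else 0) + complex_of_real (L $ a $ b))"

definition ReV :: "complex^'n \<Rightarrow> real^'n" where "ReV z = (\<chi> k. Re (z $ k))"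
definition ImV :: "complex^'n \<Rightarrow> real^'n" where "ImV z = (\<chi> k. Im (z $ k))"

lemma Lc_vec: "(Lc \<omega> *v z) $ k = Complex ((L *v ReV z - \<omega> *\<^sub>R ImV z) $ k) ((L *v ImV z + \<omega> *\<^sub>R ReV z) $ k)"
proof -
  have "(Lc \<omega> *v z) $ k = \<i> * complex_of_real \<omega> * z $ k + (\<Sum>l\<in>UNIV. complex_of_real (L $ k $ l) * z $ l)"
  proof -
    have "(Lc \<omega> *v z) $ k = (\<Sum>l\<in>UNIV. (if k = l then \<i> * complex_of_real \<omega> * z $ l else 0) + complex_of_real (L $ k $ l) * z $ l)"
      unfolding Lc_def matrix_vector_mult_def vec_lambda_beta by (intro sum.cong refl) (simp add: distrib_right)
    also have "\<dots> = (\<Sum>l\<in>UNIV. (if k = l then \<i> * complex_of_real \<omega> * z $ l else 0)) + (\<Sum>l\<in>UNIV. complex_of_real (L $ k $ l) * z $ l)"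
      by (rule sum.distrib)
    finally show ?thesis by simp
  qed
  then show ?thesis
    by (simp add: complex_eq_iff matrix_vector_mult_def ReV_def ImV_def Re_sum Im_sum)
qed


lemma Lc_inj:
  assumes w0: "\<omega> \<noteq> 0" and z0: "Lc \<omega> *v z = 0"
  shows "z = 0"
proof -
  define a where "a = ReV z"
  define b where "b = ImV z"
  have e1: "L *v a - \<omega> *\<^sub>R b = 0" and e2: "L *v b + \<omega> *\<^sub>R a = 0"
    using z0 unfolding a_def b_def
    by (simp_all add: vec_eq_iff Lc_vec complex_eq_iff del: vector_minus_component vector_add_component)
  have "0 \<bullet> a = a \<bullet> (L *v a) + b \<bullet> (L *v b)" by (rule freq_Q[OF e1 e2])
  then have s0: "a \<bullet> (L *v a) + b \<bullet> (L *v b) = 0" by simp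
  then have qa: "a \<bullet> (L *v a) = 0" and qb: "b \<bullet> (L *v b) = 0"
    using psd[of a] psd[of b] s0 by linarith+
  have "\<omega> *\<^sub>R b = 0" using e1 quad0_L[OF qa] by simp
  then have b0: "b = 0" using w0 by simp
  have "\<omega> *\<^sub>R a = 0" using e2 quad0_L[OF qb] by simp
  then have a0: "a = 0" using w0 by simp
  show ?thesis using a0 b0 unfolding a_def b_def ReV_def ImV_def
    by (simp add: vec_eq_iff complex_eq_iff)
qed

lemma Lc_invertible: "\<omega> \<noteq> 0 \<Longrightarrow> invertible (Lc \<omega>)"
  unfolding invertible_left_inverse matrix_left_invertible_ker using Lc_inj by blast

lemma transfer_eqs:
  assumes w0: "\<omega> \<noteq> 0"
  obtains a b where "L *v a - \<omega> *\<^sub>R b = E" "L *v b + \<omega> *\<^sub>R a = 0"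
    "transfer_fn L E (\<i> * complex_of_real \<omega>) = Complex (E \<bullet> a) (E \<bullet> b)"
proof -
  define Ec :: "complex^'n" where "Ec = (\<chi> k. complex_of_real (E $ k))"
  have Lc_eq: "(\<chi> a b. (if a = b then \<i> * complex_of_real \<omega> else 0) + complex_of_real (L $ a $ b)) = Lc \<omega>"
    by (simp add: Lc_def)
  define z where "z = matrix_inv (Lc \<omega>) *v Ec"
  have "Lc \<omega> ** matrix_inv (Lc \<omega>) = mat 1"
    using Lc_invertible[OF w0] unfolding invertible_def matrix_inv_def by (rule someI2_ex) blast
  then have Lz: "Lc \<omega> *v z = Ec" unfolding z_def by (simp add: matrix_vector_mul_assoc)
  have e1: "L *v ReV z - \<omega> *\<^sub>R ImV z = E" and e2: "L *v ImV z + \<omega> *\<^sub>R ReV z = 0"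
    using Lz unfolding Ec_def
    by (simp_all add: vec_eq_iff Lc_vec complex_eq_iff del: vector_minus_component vector_add_component)
  have "transfer_fn L E (\<i> * complex_of_real \<omega>) = (\<Sum>k\<in>UNIV. Ec $ k * z $ k)"
    unfolding transfer_fn_def Let_def Lc_eq z_def Ec_def by simp
  also have "\<dots> = Complex (E \<bullet> ReV z) (E \<bullet> ImV z)"
    by (simp add: complex_eq_iff Ec_def inner_vec_def ReV_def ImV_def Re_sum Im_sum)
  finally show ?thesis using that e1 e2 by blast
qed


lemma R_nonneg: assumes E1: "1 \<bullet> E = 0" shows "0 \<le> E \<bullet> (X *v E)"
proof -
  have "E \<bullet> (X *v E) = (X *v E) \<bullet> (L *v (X *v E))"
    by (simp add: LX_fix[OF E1] inner_commute)
  then show ?thesis using psd by simp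
qed

lemma gain_bounds:
  assumes E1: "1 \<bullet> E = 0" and w0: "\<omega> \<noteq> 0"
    and C: "C \<ge> 0" "\<And>u. 1 \<bullet> u = 0 \<Longrightarrow> u \<bullet> (X *v u) \<le> C * (u \<bullet> (L *v u))"
  shows "cmod (transfer_fn L E (\<i> * complex_of_real \<omega>)) \<le> E \<bullet> (X *v E)"
    and "E \<bullet> (X *v E) \<le> cmod (transfer_fn L E (\<i> * complex_of_real \<omega>)) * (1 + \<omega>^2 * C)"
proof -
  obtain a b where e1: "L *v a - \<omega> *\<^sub>R b = E" and e2: "L *v b + \<omega> *\<^sub>R a = 0"
    and G: "transfer_fn L E (\<i> * complex_of_real \<omega>) = Complex (E \<bullet> a) (E \<bullet> b)"
    using transfer_eqs[OF w0] by blast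
  define g where "g = cmod (Complex (E \<bullet> a) (E \<bullet> b))"
  define R where "R = E \<bullet> (X *v E)"
  have g2: "g^2 = (E \<bullet> a)^2 + (E \<bullet> b)^2" unfolding g_def by (simp add: cmod_def)
  have ag: "E \<bullet> a \<le> g" unfolding g_def using complex_Re_le_cmod[of "Complex (E \<bullet> a) (E \<bullet> b)"] by simp
  have g0: "g \<ge> 0" unfolding g_def by simp
  have R0: "R \<ge> 0" unfolding R_def by (rule R_nonneg[OF E1])
  have up: "g^2 \<le> R * (E \<bullet> a)" unfolding g2 R_def by (rule freq_upper[OF E1 e1 e2])
  also have "\<dots> \<le> R * g" using ag R0 by (simp add: mult_left_mono)
  finally have "g * g \<le> R * g" by (simp add: power2_eq_square)
  then have "g \<le> R" using g0 R0 by (cases "g = 0") (auto intro: mult_right_le_imp_le)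
  then show "cmod (transfer_fn L E (\<i> * complex_of_real \<omega>)) \<le> E \<bullet> (X *v E)"
    unfolding G g_def[symmetric] R_def[symmetric] .
  have "R \<le> (E \<bullet> a) * (1 + \<omega>^2 * C)" unfolding R_def by (rule freq_lower[OF E1 w0 e1 e2 C])
  also have "\<dots> \<le> g * (1 + \<omega>^2 * C)" using ag C(1) by (simp add: mult_right_mono)
  finally show "E \<bullet> (X *v E) \<le> cmod (transfer_fn L E (\<i> * complex_of_real \<omega>)) * (1 + \<omega>^2 * C)"
    unfolding G g_def[symmetric] R_def[symmetric] .
qed

lemma hinf_main:
  assumes E1: "1 \<bullet> E = 0"
  shows "hinf_gain L E = E \<bullet> (X *v E)"
proof -
  obtain C where C: "C \<ge> 0" "\<And>u. 1 \<bullet> u = 0 \<Longrightarrow> u \<bullet> (X *v u) \<le> C * (u \<bullet> (L *v u))"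
    using X_bound by blast
  define R where "R = E \<bullet> (X *v E)"
  define S where "S = {cmod (transfer_fn L E (\<i> * complex_of_real \<omega>)) | \<omega>. \<omega> \<noteq> 0}"
  have R0: "R \<ge> 0" unfolding R_def by (rule R_nonneg[OF E1])
  have ub: "\<And>x. x \<in> S \<Longrightarrow> x \<le> R"
    unfolding S_def R_def using gain_bounds(1)[OF E1 _ C] by blast
  have lb: "\<And>\<omega>. \<omega> \<noteq> 0 \<Longrightarrow> R \<le> cmod (transfer_fn L E (\<i> * complex_of_real \<omega>)) * (1 + \<omega>^2 * C)"
    unfolding R_def using gain_bounds(2)[OF E1 _ C] by blast
  have ne: "S \<noteq> {}" unfolding S_def by auto
  have "Sup S = R"
  proof (rule cSup_eq_non_empty[OF ne])
    show "\<And>x. x \<in> S \<Longrightarrow> x \<le> R" by (rule ub)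
  next
    fix y assume yub: "\<And>x. x \<in> S \<Longrightarrow> x \<le> y"
    show "R \<le> y"
    proof (rule ccontr)
      assume "\<not> R \<le> y"
      then have yR: "y < R" by simp
      have y0: "y \<ge> 0" using yub[of "cmod (transfer_fn L E (\<i> * complex_of_real 1))"] unfolding S_def
        by (metis (mono_tags, lifting) mem_Collect_eq norm_ge_zero order_trans zero_neq_one)
      define t where "t = (R - y) / (2 * (y * C + 1))"
      have yc: "y * C + 1 > 0" using y0 C(1) by (simp add: add_nonneg_pos)
      have t0: "t > 0" unfolding t_def using yR yc by simp
      define \<omega> where "\<omega> = sqrt t"
      have w0: "\<omega> \<noteq> 0" unfolding \<omega>_def using t0 by simp
      have w2: "\<omega>^2 = t" unfolding \<omega>_def using t0 by simp
      have "cmod (transfer_fn L E (\<i> * complex_of_real \<omega>)) \<le> y"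
        using yub w0 unfolding S_def by blast
      then have "R \<le> y * (1 + t * C)"
        using lb[OF w0] w2 C(1) t0 by (smt (verit) mult_right_mono zero_le_mult_iff)
      moreover have h1: "y * (t * C) * (2 * (y * C + 1)) = (y * C) * (R - y)"
        unfolding t_def using yc by (simp add: field_simps)
      moreover have h2: "(y * C) * (R - y) < (2 * (y * C + 1)) * (R - y)"
      proof (rule mult_strict_right_mono)
        show "y * C < 2 * (y * C + 1)" using mult_nonneg_nonneg[OF y0 C(1)] mult_nonneg_nonneg[OF C(1) y0] by (simp add: distrib_left)
      qed (use yR in simp)
      have "y * (t * C) * (2 * (y * C + 1)) < (2 * (y * C + 1)) * (R - y)"
        by (subst h1) (rule h2)
      then have "y * (t * C) * (2 * (y * C + 1)) < (R - y) * (2 * (y * C + 1))"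
        by (simp only: mult.commute)
      then have "y * (t * C) < R - y" by (rule mult_right_less_imp_less) (use yc in simp)
      then show False using \<open>R \<le> y * (1 + t * C)\<close> by (simp add: algebra_simps)
    qed
  qed
  then show ?thesis unfolding hinf_gain_def S_def R_def .
qed

end

theorem theorem3:
  fixes src tgt :: "'m::finite \<Rightarrow> 'n::finite" and w :: "'m \<Rightarrow> real" and i j :: 'n
  assumes no_loops: "\<And>e. src e \<noteq> tgt e"
    and pos: "\<And>e. w e > 0"
    and conn: "graph_connected src tgt"
    and ij: "i \<noteq> j"
  shows "hinf_gain (weighted_laplacian src tgt w) (port_vector i j)
           = eff_resistance (weighted_laplacian src tgt w) i j"
proof -
  interpret lapc src tgt w
    by unfold_locales (use no_loops pos conn in auto)
  have E1: "1 \<bullet> port_vector i j = 0"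
    by (simp add: port_vector_def inner_diff_right inner_axis)
  show ?thesis
    unfolding eff_resistance_def pinv_L using hinf_main[OF E1] by simp
qed

end
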